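(* Let $I\subset\mathbb{R}$ be an interval and let $f,g:I\to\mathbb{R}$ be nowhere-vanishing $C^2$ functions, $\beta\in C^1(I,\mathbb{R})$, and $H_1,H_2:I\to\mathbb{R}$ continuous. Put $$a(t)=\frac{1}{4f}\Big(4\beta^2+2\dot\beta+2\beta\frac{\dot f}{f}-4\beta\frac{\dot g}{g}+(\ln|f|)_{tt}+g\Big(\frac1g\Big)_{tt}-(\ln|f|)_t(\ln|g|)_t\Big)$$ and $h(x,t)=a(t)x^2+H_1(t)x+H_2(t)+i\beta(t)$. Let $\epsilon,\epsilon_1\in\{1,-1\}$ with $\epsilon\, g(t)/f(t)>0$ on $I$, and let $T_1>0$, $T_2,\xi_0,\xi_1,\theta_0\in\mathbb{R}$. Choose differentiable functions on $I$ with $\dot B=2\beta$, $\dot P=\frac{g^2}{f}e^{-2B}$, $\dot{\mathcal I}=\frac{f}{g}e^{B}H_1$, $\dot J=\frac{g^2}{f}e^{-2B}\mathcal I$, $\dot L=\frac{g^2}{f}e^{-2B}\mathcal I^2$, $\dot M=H_2$, and define $$T(t)=T_1P(t)+T_2,\qquad X(x,t)=\epsilon_1\sqrt{T_1}\,\frac{g}{f}e^{-B}x-2\epsilon_1\sqrt{T_1}\,J+\xi_0T_1P+\xi_1,$$ $$R(t)=e^{-B}\Big(\epsilon T_1\frac{g}{f}\Big)^{1/2},$$ $$\theta(x,t)=\frac{1}{4f}\Big(2\beta+\frac{\dot f}{f}-\frac{\dot g}{g}\Big)x^2+\frac{g}{f}e^{-B}\Big(\mathcal I-\frac{\epsilon_1\xi_0\sqrt{T_1}}{2}\Big)x-L-\frac{\xi_0^2T_1}{4}P+\epsilon_1\xi_0\sqrt{T_1}\,J+M+\theta_0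 .$$ If $\tilde\psi(\tilde x,\tilde t)$ is a solution (continuously differentiable in $\tilde t$, twice continuously differentiable in $\tilde x$) of $$i\tilde\psi_{\tilde t}+\tilde\psi_{\tilde x\tilde x}+\epsilon|\tilde\psi|^2\tilde\psi=0$$ on a domain containing $\{(X(x,t),T(t)):x\in\mathbb{R},t\in I\}$, then $$\psi(x,t)=R(t)\,e^{i\theta(x,t)}\,\tilde\psi\big(X(x,t),T(t)\big)$$ is a solution on $\mathbb{R}\times I$ of $$i\psi_t+f(t)\psi_{xx}+g(t)|\psi|^2\psi+h(x,t)\psi=0 .$$
   Context: Here $\dot{}$ denotes $d/dt$. The functions $B,P,\mathcal I,J,L,M$ are any antiderivatives satisfying the stated differential relations (with $\mathcal I$ computed from the chosen $B$, $J,L$ from the chosen $B,\mathcal I$). *)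

theory Defs
  imports "HOL-Analysis.Analysis"
begin

text \<open>Regularity of a complex-valued function u(x,t) on a set S of the (x,t)-plane:
  ut, ux, uxx are the partial derivatives u_t, u_x, u_xx (taken within the
  horizontal / vertical slices of S, which for open S are ordinary derivatives),
  and u, u_t, u_x, u_xx are (jointly) continuous on S.\<close>
definition C12_partials ::
  "(real \<Rightarrow> real \<Rightarrow> complex) \<Rightarrow> (real \<times> real) set \<Rightarrow>
   (real \<Rightarrow> real \<Rightarrow> complex) \<Rightarrow> (real \<Rightarrow> real \<Rightarrow> complex) \<Rightarrow>
   (real \<Rightarrow> real \<Rightarrow> complex) \<Rightarrow> bool" where
  "C12_partials u S ut ux uxx \<longleftrightarrow>
     (\<forall>(x,t)\<in>S.
        ((\<lambda>s. u x s) has_vector_derivative ut x t) (at t within {s. (x,s) \<in> S}) \<and>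
        ((\<lambda>y. u y t) has_vector_derivative ux x t) (at x within {y. (y,t) \<in> S}) \<and>
        ((\<lambda>y. ux y t) has_vector_derivative uxx x t) (at x within {y. (y,t) \<in> S})) \<and>
     continuous_on S (\<lambda>(x,t). u x t) \<and>
     continuous_on S (\<lambda>(x,t). ut x t) \<and>
     continuous_on S (\<lambda>(x,t). ux x t) \<and>
     continuous_on S (\<lambda>(x,t). uxx x t)"

definition nls_solution :: "real \<Rightarrow> (real \<Rightarrow> real \<Rightarrow> complex) \<Rightarrow> (real \<times> real) set \<Rightarrow> bool" where
  "nls_solution eps u S \<longleftrightarrow>
     (\<exists>ut ux uxx. C12_partials u S ut ux uxx \<and>
        (\<forall>(x,t)\<in>S. \<i> * ut x t + uxx x t
                    + complex_of_real (eps * (cmod (u x t))\<^sup>2) * u x t = 0))"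

definition vnls_solution ::
  "(real \<Rightarrow> real) \<Rightarrow> (real \<Rightarrow> real) \<Rightarrow> (real \<Rightarrow> real \<Rightarrow> complex) \<Rightarrow>
   (real \<Rightarrow> real \<Rightarrow> complex) \<Rightarrow> (real \<times> real) set \<Rightarrow> bool" where
  "vnls_solution f g h u S \<longleftrightarrow>
     (\<exists>ut ux uxx. C12_partials u S ut ux uxx \<and>
        (\<forall>(x,t)\<in>S. \<i> * ut x t + complex_of_real (f t) * uxx x t
                    + complex_of_real (g t * (cmod (u x t))\<^sup>2) * u x t
                    + h x t * u x t = 0))"

end

theory Submission imports Defs begin

lemma key_alg:
  fixes R R' \<theta>t \<theta>x \<theta>xx Xt Xx Tt f g a H1 H2 \<beta> \<epsilon> x n :: real
    and e \<Phi> \<Phi>X \<Phi>T \<Phi>XX :: complex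
  assumes R: "R \<noteq> 0"
    and F1: "Xt + 2 * f * \<theta>x * Xx = 0"
    and F2: "Tt = f * Xx\<^sup>2"
    and F3: "g * R\<^sup>2 = \<epsilon> * Tt"
    and F4: "R' + f * \<theta>xx * R + R * \<beta> = 0"
    and F5: "- \<theta>t - f * \<theta>x\<^sup>2 + a * x\<^sup>2 + H1 * x + H2 = 0"
    and nls: "\<i> * \<Phi>T + \<Phi>XX + complex_of_real (\<epsilon> * n) * \<Phi> = 0"
  shows "\<i> * (of_real R' * e * \<Phi> + of_real R * (e * (\<i> * of_real \<theta>t)) * \<Phi>
              + of_real R * e * (of_real Xt * \<Phi>X + of_real Tt * \<Phi>T))
       + of_real f * (of_real R * (e * (\<i> * of_real \<theta>x)) * (\<i> * of_real \<theta>x) * \<Phi>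
              + of_real R * e * (\<i> * of_real \<theta>xx) * \<Phi>
              + 2 * (of_real R * (e * (\<i> * of_real \<theta>x)) * (of_real Xx * \<Phi>X))
              + of_real R * e * (of_real Xx * (of_real Xx * \<Phi>XX)))
       + of_real (g * (R\<^sup>2 * n)) * (of_real R * e * \<Phi>)
       + (of_real (a * x\<^sup>2 + H1 * x + H2) + \<i> * of_real \<beta>) * (of_real R * e * \<Phi>) = 0"
proof -
  have Xt: "Xt = - 2 * f * \<theta>x * Xx" using F1 by linarith
  have th: "\<theta>t = - f * \<theta>x\<^sup>2 + a * x\<^sup>2 + H1 * x + H2" using F5 by linarith
  have R': "R' = - f * \<theta>xx * R - R * \<beta>" using F4 by linarith
  have g: "g = \<epsilon> * f * Xx\<^sup>2 / R\<^sup>2" using F3 F2 R by (simp add: field_simps)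
  have XX: "\<Phi>XX = - \<i> * \<Phi>T - complex_of_real (\<epsilon> * n) * \<Phi>" using nls by (simp add: algebra_simps add_eq_0_iff2)
  show ?thesis unfolding Xt th R' g XX F2 using R
    by (simp add: field_simps power2_eq_square)
qed

lemma psi_frechet:
  fixes \<psi> ut ux :: "real \<Rightarrow> real \<Rightarrow> complex"
  assumes D: "open D" and p: "(x, t) \<in> D"
    and dt: "\<And>x t. (x,t) \<in> D \<Longrightarrow> ((\<lambda>s. \<psi> x s) has_vector_derivative ut x t) (at t within {s. (x,s) \<in> D})"
    and dx: "\<And>x t. (x,t) \<in> D \<Longrightarrow> ((\<lambda>y. \<psi> y t) has_vector_derivative ux x t) (at x within {y. (y,t) \<in> D})"
    and ct: "continuous_on D (\<lambda>(x,t). ut x t)"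
  shows "((\<lambda>(x,t). \<psi> x t) has_derivative (\<lambda>(h,k). h *\<^sub>R ux x t + k *\<^sub>R ut x t)) (at (x,t))"
proof -
  obtain A B where AB: "open A" "open B" "(x,t) \<in> A \<times> B" "A \<times> B \<subseteq> D"
    using open_prod_elim[OF D p] by blast
  obtain r where r: "r > 0" "ball t r \<subseteq> B" using AB(2,3) open_contains_ball by blast
  define Y where "Y = ball t r"
  have sub: "A \<times> Y \<subseteq> D" using AB r Y_def by auto
  have tY: "t \<in> Y" using r Y_def by simp
  have opn: "open (A \<times> Y)" using AB Y_def by (simp add: open_Times)
  have "((\<lambda>(x,t). \<psi> x t) has_derivative (\<lambda>(h,k). h *\<^sub>R ux x t + blinfun_scaleR_left (ut x t) k)) (at (x,t) within A \<times> Y)"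
  proof (rule has_derivative_partialsI)
    have "((\<lambda>y. \<psi> y t) has_vector_derivative ux x t) (at x within {y. (y,t) \<in> D})" using dx p .
    then have "((\<lambda>y. \<psi> y t) has_vector_derivative ux x t) (at x within A)"
      by (rule has_vector_derivative_within_subset) (use sub tY in auto)
    then show "((\<lambda>y. \<psi> y t) has_derivative (\<lambda>h. h *\<^sub>R ux x t)) (at x within A)"
      by (simp add: has_vector_derivative_def)
  next
    fix x' y' assume "x' \<in> A" "y' \<in> Y"
    then have m: "(x',y') \<in> D" using sub by auto
    have "((\<lambda>s. \<psi> x' s) has_vector_derivative ut x' y') (at y' within Y)"
      by (rule has_vector_derivative_within_subset[OF dt[OF m]]) (use sub \<open>x' \<in> A\<close> in auto)
    then show "((\<lambda>s. \<psi> x' s) has_derivative blinfun_apply (blinfun_scaleR_left (ut x' y'))) (at y' within Y)"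
      by (simp add: has_vector_derivative_def)
  next
    have "continuous (at (x,t)) (\<lambda>(x,t). ut x t)"
      using ct D p by (simp add: continuous_on_eq_continuous_at)
    then have "continuous (at (x,t)) (\<lambda>p. blinfun_scaleR_left ((\<lambda>(x,t). ut x t) p))"
      by (intro continuous_intros bounded_linear.continuous[OF bounded_linear_blinfun_scaleR_left])
    then show "continuous (at (x, t) within A \<times> Y) (\<lambda>(x, y). blinfun_scaleR_left (ut x y))"
      by (simp add: continuous_at_imp_continuous_within case_prod_unfold)
  qed (use tY Y_def in auto)
  then show ?thesis
    using at_within_open[OF _ opn] AB tY by (simp add: )
qed

lemma vd_exp_i:
  fixes \<phi> :: "real \<Rightarrow> real"
  assumes "(\<phi> has_real_derivative d) (at x within S)"
  shows "((\<lambda>s. exp (\<i> * complex_of_real (\<phi> s))) has_vector_derivative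
            exp (\<i> * complex_of_real (\<phi> x)) * (\<i> * complex_of_real d)) (at x within S)"
proof -
  have f: "((\<lambda>s. \<i> * complex_of_real (\<phi> s)) has_vector_derivative \<i> * complex_of_real d) (at x within S)"
    by (intro has_vector_derivative_mult_right has_vector_derivative_of_real assms)
  have g: "(exp has_field_derivative exp (\<i> * complex_of_real (\<phi> x)))
            (at (\<i> * complex_of_real (\<phi> x)) within (\<lambda>s. \<i> * complex_of_real (\<phi> s)) ` S)"
    by (rule has_field_derivative_at_within) (rule DERIV_exp)
  show ?thesis
    using field_vector_diff_chain_within[OF f g] by (simp add: o_def mult.commute)
qed

lemma vd_comp:
  fixes \<phi> :: "real \<Rightarrow> real" and G :: "real \<Rightarrow> complex"
  assumes "(\<phi> has_real_derivative d) (at x within S)"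
    and "(G has_vector_derivative G') (at (\<phi> x))"
  shows "((\<lambda>s. G (\<phi> s)) has_vector_derivative complex_of_real d * G') (at x within S)"
proof -
  have f: "(\<phi> has_vector_derivative d) (at x within S)"
    using assms(1) by (simp add: has_real_derivative_iff_has_vector_derivative)
  have g: "(G has_vector_derivative G') (at (\<phi> x) within \<phi> ` S)"
    using assms(2) by (rule has_vector_derivative_at_within)
  show ?thesis using vector_diff_chain_within[OF f g] by (simp add: o_def scaleR_conv_of_real)
qed

lemma vd_comp2:
  fixes X T :: "real \<Rightarrow> real" and G :: "real \<Rightarrow> real \<Rightarrow> complex"
  assumes "(X has_real_derivative dX) (at x within S)"
    and "(T has_real_derivative dT) (at x within S)"
    and "((\<lambda>(a,b). G a b) has_derivative (\<lambda>(h,k). h *\<^sub>R Gx + k *\<^sub>R Gt)) (at (X x, T x))"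
  shows "((\<lambda>s. G (X s) (T s)) has_vector_derivative
            complex_of_real dX * Gx + complex_of_real dT * Gt) (at x within S)"
proof -
  have f: "((\<lambda>s. (X s, T s)) has_vector_derivative (dX, dT)) (at x within S)"
    using assms(1,2) by (intro has_vector_derivative_Pair) (simp_all add: has_real_derivative_iff_has_vector_derivative)
  have g: "((\<lambda>(a,b). G a b) has_derivative (\<lambda>(h,k). h *\<^sub>R Gx + k *\<^sub>R Gt)) (at (X x, T x) within (\<lambda>s. (X s, T s)) ` S)"
    using assms(3) by (rule has_derivative_at_withinI)
  show ?thesis using vector_derivative_diff_chain_within[OF f g] by (simp add: o_def scaleR_conv_of_real)
qed

theorem mainTheorem2:
  fixes I :: "real set"
    and f f' f'' g g' g'' \<beta> \<beta>' H1 H2 :: "real \<Rightarrow> real"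
    and B P \<I> J L M :: "real \<Rightarrow> real"
    and \<epsilon> \<epsilon>1 T1 T2 \<xi>0 \<xi>1 \<theta>0 :: real
    and \<psi>t :: "real \<Rightarrow> real \<Rightarrow> complex"
    and D :: "(real \<times> real) set"
  assumes I: "is_interval I"
    and f_deriv: "\<And>t. t \<in> I \<Longrightarrow> (f has_real_derivative f' t) (at t within I)"
    and f'_deriv: "\<And>t. t \<in> I \<Longrightarrow> (f' has_real_derivative f'' t) (at t within I)"
    and f''_cont: "continuous_on I f''"
    and g_deriv: "\<And>t. t \<in> I \<Longrightarrow> (g has_real_derivative g' t) (at t within I)"
    and g'_deriv: "\<And>t. t \<in> I \<Longrightarrow> (g' has_real_derivative g'' t) (at t within I)"
    and g''_cont: "continuous_on I g''"
    and f_nz: "\<And>t. t \<in> I \<Longrightarrow> f t \<noteq> 0"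
    and g_nz: "\<And>t. t \<in> I \<Longrightarrow> g t \<noteq> 0"
    and \<beta>_deriv: "\<And>t. t \<in> I \<Longrightarrow> (\<beta> has_real_derivative \<beta>' t) (at t within I)"
    and \<beta>'_cont: "continuous_on I \<beta>'"
    and H1_cont: "continuous_on I H1"
    and H2_cont: "continuous_on I H2"
    and \<epsilon>: "\<epsilon> \<in> {1, -1}"
    and \<epsilon>1: "\<epsilon>1 \<in> {1, -1}"
    and sign: "\<And>t. t \<in> I \<Longrightarrow> \<epsilon> * g t / f t > 0"
    and T1: "T1 > 0"
    and B_deriv: "\<And>t. t \<in> I \<Longrightarrow> (B has_real_derivative 2 * \<beta> t) (at t within I)"
    and P_deriv: "\<And>t. t \<in> I \<Longrightarrow>
       (P has_real_derivative (g t)\<^sup>2 / f t * exp (- 2 * B t)) (at t within I)"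
    and \<I>_deriv: "\<And>t. t \<in> I \<Longrightarrow>
       (\<I> has_real_derivative f t / g t * exp (B t) * H1 t) (at t within I)"
    and J_deriv: "\<And>t. t \<in> I \<Longrightarrow>
       (J has_real_derivative (g t)\<^sup>2 / f t * exp (- 2 * B t) * \<I> t) (at t within I)"
    and L_deriv: "\<And>t. t \<in> I \<Longrightarrow>
       (L has_real_derivative (g t)\<^sup>2 / f t * exp (- 2 * B t) * (\<I> t)\<^sup>2) (at t within I)"
    and M_deriv: "\<And>t. t \<in> I \<Longrightarrow> (M has_real_derivative H2 t) (at t within I)"
    and a_def: "a = (\<lambda>t. 1 / (4 * f t) *
         (4 * (\<beta> t)\<^sup>2 + 2 * \<beta>' t + 2 * \<beta> t * f' t / f t - 4 * \<beta> t * g' t / g t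
          + (f'' t / f t - (f' t / f t)\<^sup>2)
          + (- g'' t / g t + 2 * (g' t / g t)\<^sup>2)
          - (f' t / f t) * (g' t / g t)))"
    and h_def: "h = (\<lambda>x t. complex_of_real (a t * x\<^sup>2 + H1 t * x + H2 t) + \<i> * complex_of_real (\<beta> t))"
    and T_def: "T = (\<lambda>t. T1 * P t + T2)"
    and X_def: "X = (\<lambda>x t. \<epsilon>1 * sqrt T1 * (g t / f t) * exp (- B t) * x
                         - 2 * \<epsilon>1 * sqrt T1 * J t + \<xi>0 * T1 * P t + \<xi>1)"
    and R_def: "R = (\<lambda>t. exp (- B t) * sqrt (\<epsilon> * T1 * (g t / f t)))"
    and \<theta>_def: "\<theta> = (\<lambda>x t. 1 / (4 * f t) * (2 * \<beta> t + f' t / f t - g' t / g t) * x\<^sup>2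
         + (g t / f t) * exp (- B t) * (\<I> t - \<epsilon>1 * \<xi>0 * sqrt T1 / 2) * x
         - L t - \<xi>0\<^sup>2 * T1 / 4 * P t + \<epsilon>1 * \<xi>0 * sqrt T1 * J t + M t + \<theta>0)"
    and D_open: "open D"
    and D_contains: "\<And>x t. t \<in> I \<Longrightarrow> (X x t, T t) \<in> D"
    and sol: "nls_solution \<epsilon> \<psi>t D"
  shows "vnls_solution f g h
           (\<lambda>x t. complex_of_real (R t) * exp (\<i> * complex_of_real (\<theta> x t)) * \<psi>t (X x t) (T t))
           (UNIV \<times> I)"
proof -
  define e where "e = (\<lambda>t. exp (- B t))"
  define u where "u = (\<lambda>t. 2 * \<beta> t + f' t / f t - g' t / g t)"
  define ud where "ud = (\<lambda>t. 2 * \<beta>' t + (f'' t * f t - f' t * f' t) / (f t)\<^sup>2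
                           - (g'' t * g t - g' t * g' t) / (g t)\<^sup>2)"
  define Pd where "Pd = (\<lambda>t. (g t)\<^sup>2 / f t * exp (- 2 * B t))"
  define c where "c = \<epsilon>1 * \<xi>0 * sqrt T1 / 2"
  define Xx where "Xx = (\<lambda>t. \<epsilon>1 * sqrt T1 * (g t / f t) * exp (- B t))"
  define Gd where "Gd = (\<lambda>t. (g' t * f t - g t * f' t) / (f t)\<^sup>2 * exp (- B t) - g t / f t * exp (- B t) * (2 * \<beta> t))"
  define Xt where "Xt = (\<lambda>x t. \<epsilon>1 * sqrt T1 * Gd t * x - 2 * \<epsilon>1 * sqrt T1 * (Pd t * \<I> t) + \<xi>0 * T1 * Pd t)"
  define q where "q = (\<lambda>t. \<epsilon> * T1 * (g t / f t))"
  define qd where "qd = (\<lambda>t. \<epsilon> * T1 * ((g' t * f t - g t * f' t) / (f t)\<^sup>2))"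
  define Rd where "Rd = (\<lambda>t. exp (- B t) * (- (2 * \<beta> t)) * sqrt (q t) + exp (- B t) * (qd t / (2 * sqrt (q t))))"
  define \<theta>x where "\<theta>x = (\<lambda>x t. 2 * (1 / (4 * f t) * u t) * x + (g t / f t) * exp (- B t) * (\<I> t - c))"
  define \<theta>xx where "\<theta>xx = (\<lambda>t. 2 * (1 / (4 * f t) * u t))"
  define Ad where "Ad = (\<lambda>t. - (4 * f' t) / (4 * f t)\<^sup>2 * u t + 1 / (4 * f t) * ud t)"
  define Cd where "Cd = (\<lambda>t. Gd t * (\<I> t - c) + g t / f t * exp (- B t) * (f t / g t * exp (B t) * H1 t))"
  define Ed where "Ed = (\<lambda>t. - (Pd t * (\<I> t)\<^sup>2) - \<xi>0\<^sup>2 * T1 / 4 * Pd t + \<epsilon>1 * \<xi>0 * sqrt T1 * (Pd t * \<I> t) + H2 t)"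
  define \<theta>t where "\<theta>t = (\<lambda>x t. Ad t * x\<^sup>2 + Cd t * x + Ed t)"
  have \<theta>_eq: "\<theta> = (\<lambda>x t. 1 / (4 * f t) * u t * x\<^sup>2 + (g t / f t) * exp (- B t) * (\<I> t - c) * x
         - L t - \<xi>0\<^sup>2 * T1 / 4 * P t + \<epsilon>1 * \<xi>0 * sqrt T1 * J t + M t + \<theta>0)"
    unfolding \<theta>_def u_def c_def by simp
  have q_pos: "q t > 0" if "t \<in> I" for t
  proof -
    have "q t = T1 * (\<epsilon> * g t / f t)" unfolding q_def by simp
    then show ?thesis using mult_pos_pos[OF T1 sign[OF that]] by (simp only:)
  qed
  have R_eq: "R = (\<lambda>t. exp (- B t) * sqrt (q t))" unfolding R_def q_def by simp
  have dX: "((\<lambda>s. X x s) has_real_derivative Xt x t) (at t within I)" if t: "t \<in> I" for x t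
    unfolding X_def Xt_def Gd_def Pd_def
    using t f_nz[OF t]
    by (auto intro!: derivative_eq_intros f_deriv g_deriv B_deriv J_deriv P_deriv simp: field_simps power2_eq_square)
  have dT: "((\<lambda>s. T s) has_real_derivative T1 * Pd t) (at t within I)" if t: "t \<in> I" for t
    unfolding T_def Pd_def
    using t by (auto intro!: derivative_eq_intros P_deriv)
  have dR: "((\<lambda>s. R s) has_real_derivative Rd t) (at t within I)" if t: "t \<in> I" for t
    unfolding R_eq Rd_def q_def qd_def
    using t f_nz[OF t] q_pos[OF t] unfolding q_def
    by (auto intro!: derivative_eq_intros f_deriv g_deriv B_deriv simp: field_simps power2_eq_square)
  have dth: "((\<lambda>s. \<theta> x s) has_real_derivative \<theta>t x t) (at t within I)" if t: "t \<in> I" for x t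
    unfolding \<theta>_eq \<theta>t_def Ad_def Cd_def Ed_def Gd_def Pd_def u_def ud_def
    using t f_nz[OF t] g_nz[OF t]
    by (auto intro!: derivative_eq_intros f_deriv g_deriv f'_deriv g'_deriv \<beta>_deriv B_deriv J_deriv P_deriv L_deriv M_deriv \<I>_deriv simp: field_simps power2_eq_square)
  have e1: "\<epsilon>1\<^sup>2 = 1" using \<epsilon>1 by auto
  have sT: "(sqrt T1)\<^sup>2 = T1" using T1 by simp
  have exp2: "exp (- 2 * B t) = (exp (- B t))\<^sup>2" for t
    by (simp add: power2_eq_square flip: exp_add)
  have expB: "exp (B t) = 1 / exp (- B t)" for t by (simp add: exp_minus field_simps)
  obtain s where s: "s > 0" "sqrt T1 = s" "T1 = s\<^sup>2" using T1 by (intro that[of "sqrt T1"]) auto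
  have e1c: "\<epsilon>1 = 1 \<or> \<epsilon>1 = -1" using \<epsilon>1 by auto
  have F1: "Xt x t + 2 * f t * \<theta>x x t * Xx t = 0" if t: "t \<in> I" for x t
    unfolding Xt_def \<theta>x_def Xx_def Gd_def Pd_def u_def c_def exp2 s(2,3)
    using f_nz[OF t] g_nz[OF t] e1c by (auto simp: field_simps power2_eq_square)
  have F2: "T1 * Pd t = f t * (Xx t)\<^sup>2" if t: "t \<in> I" for t
    unfolding Pd_def Xx_def exp2 s(2,3) using f_nz[OF t] e1c
    by (auto simp: field_simps power2_eq_square)
  have F3: "g t * (R t)\<^sup>2 = \<epsilon> * (T1 * Pd t)" if t: "t \<in> I" for t
  proof -
    have "(R t)\<^sup>2 = (exp (- B t))\<^sup>2 * q t" using q_pos[OF t] by (simp add: R_eq power_mult_distrib)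
    then show ?thesis unfolding Pd_def exp2 q_def using f_nz[OF t]
      by (simp add: field_simps power2_eq_square)
  qed
  have F4: "Rd t + f t * \<theta>xx t * R t + R t * \<beta> t = 0" if t: "t \<in> I" for t
  proof -
    have qd_eq: "qd t = q t * (g' t / g t - f' t / f t)"
      unfolding q_def qd_def using f_nz[OF t] g_nz[OF t] by (simp add: field_simps power2_eq_square)
    have sq0: "sqrt (q t) > 0" using q_pos[OF t] by simp
    have sq: "q t = sqrt (q t) * sqrt (q t)" using q_pos[OF t] by simp
    have hq: "qd t / (2 * sqrt (q t)) = sqrt (q t) * (g' t / g t - f' t / f t) / 2"
    proof -
      have aux: "r * r * k / (2 * r) = r * k / 2" if "r > 0" for r k :: real using that by (simp add: field_simps)
      have "qd t / (2 * sqrt (q t)) = sqrt (q t) * sqrt (q t) * (g' t / g t - f' t / f t) / (2 * sqrt (q t))"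
        unfolding qd_eq using q_pos[OF t] by simp
      also have "\<dots> = sqrt (q t) * (g' t / g t - f' t / f t) / 2" by (rule aux[OF sq0])
      finally show ?thesis .
    qed
    have hR: "Rd t = exp (- B t) * sqrt (q t) * (- 2 * \<beta> t + (g' t / g t - f' t / f t) / 2)"
      unfolding Rd_def hq by (simp add: algebra_simps)
    show ?thesis unfolding R_eq \<theta>xx_def u_def hR using f_nz[OF t] g_nz[OF t]
      by (simp add: field_simps)
  qed
  have F5: "- \<theta>t x t - f t * (\<theta>x x t)\<^sup>2 + a t * x\<^sup>2 + H1 t * x + H2 t = 0" if t: "t \<in> I" for x t
  proof -
    have ep: "exp (- B t) \<noteq> 0" by simp
    show ?thesis
      unfolding \<theta>t_def \<theta>x_def a_def Ad_def Cd_def Ed_def Gd_def Pd_def u_def ud_def c_def exp2 expB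
      using f_nz[OF t] g_nz[OF t] ep e1c unfolding s(2,3)
      by (auto simp: field_simps power2_eq_square)
  qed
  obtain \<Psi>t \<Psi>x \<Psi>xx where C12: "C12_partials \<psi>t D \<Psi>t \<Psi>x \<Psi>xx"
    and nlseq: "\<And>x t. (x,t) \<in> D \<Longrightarrow> \<i> * \<Psi>t x t + \<Psi>xx x t + complex_of_real (\<epsilon> * (cmod (\<psi>t x t))\<^sup>2) * \<psi>t x t = 0"
    using sol unfolding nls_solution_def by blast
  have Pd_t: "\<And>x t. (x,t) \<in> D \<Longrightarrow> ((\<lambda>s. \<psi>t x s) has_vector_derivative \<Psi>t x t) (at t within {s. (x,s) \<in> D})"
    and Pd_x: "\<And>x t. (x,t) \<in> D \<Longrightarrow> ((\<lambda>y. \<psi>t y t) has_vector_derivative \<Psi>x x t) (at x within {y. (y,t) \<in> D})"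
    and Pd_xx: "\<And>x t. (x,t) \<in> D \<Longrightarrow> ((\<lambda>y. \<Psi>x y t) has_vector_derivative \<Psi>xx x t) (at x within {y. (y,t) \<in> D})"
    and Pc: "continuous_on D (\<lambda>(x,t). \<psi>t x t)" and Pct: "continuous_on D (\<lambda>(x,t). \<Psi>t x t)"
    and Pcx: "continuous_on D (\<lambda>(x,t). \<Psi>x x t)" and Pcxx: "continuous_on D (\<lambda>(x,t). \<Psi>xx x t)"
    using C12 unfolding C12_partials_def by auto
  have slice: "open {y. (y, c) \<in> D}" for c
  proof -
    have "{y. (y, c) \<in> D} = (\<lambda>y. (y, c)) -` D" by auto
    moreover have "open ((\<lambda>y. (y, c)) -` D)"
      by (rule open_vimage[OF D_open]) (intro continuous_intros)
    ultimately show ?thesis by simp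
  qed
  have frech: "((\<lambda>(x,t). \<psi>t x t) has_derivative (\<lambda>(h,k). h *\<^sub>R \<Psi>x a b + k *\<^sub>R \<Psi>t a b)) (at (a,b))"
    if "(a,b) \<in> D" for a b
    by (rule psi_frechet[OF D_open that Pd_t Pd_x Pct])
  have dPx: "((\<lambda>y. \<psi>t y b) has_vector_derivative \<Psi>x a b) (at a)" if "(a,b) \<in> D" for a b
    using Pd_x[OF that] has_vector_derivative_within_open[OF _ slice] that by auto
  have dPxx: "((\<lambda>y. \<Psi>x y b) has_vector_derivative \<Psi>xx a b) (at a)" if "(a,b) \<in> D" for a b
    using Pd_xx[OF that] has_vector_derivative_within_open[OF _ slice] that by auto
  define E where "E = (\<lambda>x t. exp (\<i> * complex_of_real (\<theta> x t)))"
  define \<Phi> where "\<Phi> = (\<lambda>x t. \<psi>t (X x t) (T t))"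
  define \<Phi>X where "\<Phi>X = (\<lambda>x t. \<Psi>x (X x t) (T t))"
  define \<Phi>T where "\<Phi>T = (\<lambda>x t. \<Psi>t (X x t) (T t))"
  define \<Phi>XX where "\<Phi>XX = (\<lambda>x t. \<Psi>xx (X x t) (T t))"
  define uu where "uu = (\<lambda>x t. complex_of_real (R t) * exp (\<i> * complex_of_real (\<theta> x t)) * \<psi>t (X x t) (T t))"
  define ut where "ut = (\<lambda>x t. of_real (Rd t) * E x t * \<Phi> x t + of_real (R t) * (E x t * (\<i> * of_real (\<theta>t x t))) * \<Phi> x t
              + of_real (R t) * E x t * (of_real (Xt x t) * \<Phi>X x t + of_real (T1 * Pd t) * \<Phi>T x t))"
  define ux where "ux = (\<lambda>x t. of_real (R t) * (E x t * (\<i> * of_real (\<theta>x x t))) * \<Phi> x t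
              + of_real (R t) * E x t * (of_real (Xx t) * \<Phi>X x t))"
  define uxx where "uxx = (\<lambda>x t. of_real (R t) * (E x t * (\<i> * of_real (\<theta>x x t))) * (\<i> * of_real (\<theta>x x t)) * \<Phi> x t
              + of_real (R t) * E x t * (\<i> * of_real (\<theta>xx t)) * \<Phi> x t
              + 2 * (of_real (R t) * (E x t * (\<i> * of_real (\<theta>x x t))) * (of_real (Xx t) * \<Phi>X x t))
              + of_real (R t) * E x t * (of_real (Xx t) * (of_real (Xx t) * \<Phi>XX x t)))"
  have uu_eq: "uu x t = of_real (R t) * E x t * \<Phi> x t" for x t unfolding uu_def E_def \<Phi>_def by simp
  have dut: "((\<lambda>s. uu x s) has_vector_derivative ut x t) (at t within I)" if t: "t \<in> I" for x t
  proof -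
    have dE: "((\<lambda>s. E x s) has_vector_derivative E x t * (\<i> * of_real (\<theta>t x t))) (at t within I)"
      unfolding E_def by (rule vd_exp_i[OF dth[OF t]])
    have dPh: "((\<lambda>s. \<Phi> x s) has_vector_derivative of_real (Xt x t) * \<Phi>X x t + of_real (T1 * Pd t) * \<Phi>T x t) (at t within I)"
      unfolding \<Phi>_def \<Phi>X_def \<Phi>T_def
      by (rule vd_comp2[OF dX[OF t] dT[OF t] frech[OF D_contains[OF t]]])
    have dRc: "((\<lambda>s. complex_of_real (R s)) has_vector_derivative of_real (Rd t)) (at t within I)"
      by (rule has_vector_derivative_of_real[OF dR[OF t]])
    show ?thesis unfolding uu_eq
      by (rule has_vector_derivative_eq_rhs[OF has_vector_derivative_mult[OF has_vector_derivative_mult[OF dRc dE] dPh]])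
         (simp add: ut_def algebra_simps)
  qed
  have dXx: "((\<lambda>y. X y t) has_real_derivative Xx t) (at x)" if t: "t \<in> I" for x t
    unfolding X_def Xx_def using f_nz[OF t] by (auto intro!: derivative_eq_intros)
  have dthx: "((\<lambda>y. \<theta> y t) has_real_derivative \<theta>x x t) (at x)" if t: "t \<in> I" for x t
    unfolding \<theta>_eq \<theta>x_def using f_nz[OF t] by (auto intro!: derivative_eq_intros)
  have dthxx: "((\<lambda>y. \<theta>x y t) has_real_derivative \<theta>xx t) (at x)" if t: "t \<in> I" for x t
    unfolding \<theta>x_def \<theta>xx_def using f_nz[OF t] by (auto intro!: derivative_eq_intros)
  have dux: "((\<lambda>y. uu y t) has_vector_derivative ux x t) (at x)" if t: "t \<in> I" for x t
  proof -
    have dE: "((\<lambda>y. E y t) has_vector_derivative E x t * (\<i> * of_real (\<theta>x x t))) (at x)"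
      unfolding E_def by (rule vd_exp_i[OF dthx[OF t]])
    have dPh: "((\<lambda>y. \<Phi> y t) has_vector_derivative of_real (Xx t) * \<Phi>X x t) (at x)"
      unfolding \<Phi>_def \<Phi>X_def by (rule vd_comp[OF dXx[OF t] dPx[OF D_contains[OF t]]])
    show ?thesis unfolding uu_eq
      by (rule has_vector_derivative_eq_rhs[OF has_vector_derivative_mult[OF has_vector_derivative_mult_right[OF dE] dPh]])
         (simp add: ux_def algebra_simps)
  qed
  have duxx: "((\<lambda>y. ux y t) has_vector_derivative uxx x t) (at x)" if t: "t \<in> I" for x t
  proof -
    have dE: "((\<lambda>y. E y t) has_vector_derivative E x t * (\<i> * of_real (\<theta>x x t))) (at x)"
      unfolding E_def by (rule vd_exp_i[OF dthx[OF t]])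
    have dPh: "((\<lambda>y. \<Phi> y t) has_vector_derivative of_real (Xx t) * \<Phi>X x t) (at x)"
      unfolding \<Phi>_def \<Phi>X_def by (rule vd_comp[OF dXx[OF t] dPx[OF D_contains[OF t]]])
    have dPhX: "((\<lambda>y. \<Phi>X y t) has_vector_derivative of_real (Xx t) * \<Phi>XX x t) (at x)"
      unfolding \<Phi>X_def \<Phi>XX_def by (rule vd_comp[OF dXx[OF t] dPxx[OF D_contains[OF t]]])
    have dthc: "((\<lambda>y. \<i> * complex_of_real (\<theta>x y t)) has_vector_derivative \<i> * of_real (\<theta>xx t)) (at x)"
      by (intro has_vector_derivative_mult_right has_vector_derivative_of_real dthxx[OF t])
    have d1: "((\<lambda>y. of_real (R t) * (E y t * (\<i> * of_real (\<theta>x y t))) * \<Phi> y t) has_vector_derivative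
       of_real (R t) * (E x t * (\<i> * of_real (\<theta>x x t))) * (of_real (Xx t) * \<Phi>X x t)
       + of_real (R t) * (E x t * (\<i> * of_real (\<theta>xx t)) + E x t * (\<i> * of_real (\<theta>x x t)) * (\<i> * of_real (\<theta>x x t))) * \<Phi> x t) (at x)"
      by (rule has_vector_derivative_eq_rhs[OF has_vector_derivative_mult[OF has_vector_derivative_mult_right[OF has_vector_derivative_mult[OF dE dthc]] dPh]])
         (simp add: algebra_simps)
    have d2: "((\<lambda>y. of_real (R t) * E y t * (of_real (Xx t) * \<Phi>X y t)) has_vector_derivative
       of_real (R t) * E x t * (of_real (Xx t) * (of_real (Xx t) * \<Phi>XX x t))
       + of_real (R t) * (E x t * (\<i> * of_real (\<theta>x x t))) * (of_real (Xx t) * \<Phi>X x t)) (at x)"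
      by (rule has_vector_derivative_eq_rhs[OF has_vector_derivative_mult[OF has_vector_derivative_mult_right[OF dE] has_vector_derivative_mult_right[OF dPhX]]])
         (simp add: algebra_simps)
    show ?thesis unfolding ux_def
      by (rule has_vector_derivative_eq_rhs[OF has_vector_derivative_add[OF d1 d2]])
         (simp add: uxx_def algebra_simps)
  qed
  have cf: "continuous_on I f" by (rule DERIV_continuous_on[OF f_deriv])
  have cf': "continuous_on I f'" by (rule DERIV_continuous_on[OF f'_deriv])
  have cg: "continuous_on I g" by (rule DERIV_continuous_on[OF g_deriv])
  have cg': "continuous_on I g'" by (rule DERIV_continuous_on[OF g'_deriv])
  have c\<beta>: "continuous_on I \<beta>" by (rule DERIV_continuous_on[OF \<beta>_deriv])
  have cB: "continuous_on I B" by (rule DERIV_continuous_on[OF B_deriv])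
  have cP: "continuous_on I P" by (rule DERIV_continuous_on[OF P_deriv])
  have cI: "continuous_on I \<I>" by (rule DERIV_continuous_on[OF \<I>_deriv])
  have cJ: "continuous_on I J" by (rule DERIV_continuous_on[OF J_deriv])
  have cL: "continuous_on I L" by (rule DERIV_continuous_on[OF L_deriv])
  have cM: "continuous_on I M" by (rule DERIV_continuous_on[OF M_deriv])
  note cbase = cf cf' f''_cont cg cg' g''_cont c\<beta> \<beta>'_cont cB cP cI cJ cL cM H1_cont H2_cont
  have fnz': "\<forall>t\<in>I. f t \<noteq> 0" "\<forall>t\<in>I. g t \<noteq> 0" "\<forall>t\<in>I. sqrt (q t) \<noteq> 0" "\<forall>t\<in>I. q t > 0"
    using f_nz g_nz q_pos by (auto simp del: real_sqrt_eq_zero_cancel_iff) (use q_pos in force)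
  have cu: "continuous_on I u" unfolding u_def using fnz' by (intro continuous_intros cbase) auto
  have cud: "continuous_on I ud" unfolding ud_def using fnz' by (intro continuous_intros cbase) auto
  have cPd: "continuous_on I Pd" unfolding Pd_def using fnz' by (intro continuous_intros cbase) auto
  have cGd: "continuous_on I Gd" unfolding Gd_def using fnz' by (intro continuous_intros cbase) auto
  have cXx: "continuous_on I Xx" unfolding Xx_def using fnz' by (intro continuous_intros cbase) auto
  have cR: "continuous_on I R" unfolding R_eq q_def using fnz' by (intro continuous_intros cbase) auto
  have cq: "continuous_on I q" unfolding q_def using fnz' by (intro continuous_intros cbase) auto
  have cRd: "continuous_on I Rd" unfolding Rd_def qd_def using fnz' by (intro continuous_intros cbase cq) auto
  have cAd: "continuous_on I Ad" unfolding Ad_def using fnz' by (intro continuous_intros cbase cu cud) auto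
  have cCd: "continuous_on I Cd" unfolding Cd_def using fnz' by (intro continuous_intros cbase cGd) auto
  have cEd: "continuous_on I Ed" unfolding Ed_def using fnz' by (intro continuous_intros cbase cPd) auto
  have lift: "continuous_on (UNIV \<times> I) (\<lambda>p. \<phi> (snd p))" if "continuous_on I \<phi>" for \<phi> :: "real \<Rightarrow> real"
    by (rule continuous_on_compose2[OF that continuous_on_snd]) auto
  note cl = lift[OF cf] lift[OF cg] lift[OF cB] lift[OF cP] lift[OF cI] lift[OF cJ] lift[OF cL] lift[OF cM]
    lift[OF cu] lift[OF cPd] lift[OF cGd] lift[OF cXx] lift[OF cR] lift[OF cRd] lift[OF cAd] lift[OF cCd] lift[OF cEd]
  have fnz2: "\<forall>p\<in>UNIV \<times> I. f (snd p) \<noteq> 0" using f_nz by auto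
  have cX: "continuous_on (UNIV \<times> I) (\<lambda>p. X (fst p) (snd p))"
    unfolding X_def using fnz2 by (intro continuous_intros cl) auto
  have cT: "continuous_on (UNIV \<times> I) (\<lambda>p. T (snd p))"
    unfolding T_def by (intro continuous_intros cl)
  have cm: "continuous_on (UNIV \<times> I) (\<lambda>p. (X (fst p) (snd p), T (snd p)))"
    by (intro continuous_intros cX cT)
  have mD: "(\<lambda>p. (X (fst p) (snd p), T (snd p))) ` (UNIV \<times> I) \<subseteq> D" using D_contains by auto
  have compD: "continuous_on (UNIV \<times> I) (\<lambda>p. G (X (fst p) (snd p)) (T (snd p)))"
    if "continuous_on D (\<lambda>(x,t). G x t)" for G :: "real \<Rightarrow> real \<Rightarrow> complex"
    using continuous_on_compose2[OF that cm mD] by simp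
  have cPh: "continuous_on (UNIV \<times> I) (\<lambda>p. \<Phi> (fst p) (snd p))" unfolding \<Phi>_def by (rule compD[OF Pc])
  have cPhX: "continuous_on (UNIV \<times> I) (\<lambda>p. \<Phi>X (fst p) (snd p))" unfolding \<Phi>X_def by (rule compD[OF Pcx])
  have cPhT: "continuous_on (UNIV \<times> I) (\<lambda>p. \<Phi>T (fst p) (snd p))" unfolding \<Phi>T_def by (rule compD[OF Pct])
  have cPhXX: "continuous_on (UNIV \<times> I) (\<lambda>p. \<Phi>XX (fst p) (snd p))" unfolding \<Phi>XX_def by (rule compD[OF Pcxx])
  have cth: "continuous_on (UNIV \<times> I) (\<lambda>p. \<theta> (fst p) (snd p))"
    unfolding \<theta>_eq using fnz2 by (intro continuous_intros cl) auto
  have cthx: "continuous_on (UNIV \<times> I) (\<lambda>p. \<theta>x (fst p) (snd p))"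
    unfolding \<theta>x_def using fnz2 by (intro continuous_intros cl) auto
  have cthxx: "continuous_on (UNIV \<times> I) (\<lambda>p. \<theta>xx (snd p))"
    unfolding \<theta>xx_def using fnz2 by (intro continuous_intros cl) auto
  have ctht: "continuous_on (UNIV \<times> I) (\<lambda>p. \<theta>t (fst p) (snd p))"
    unfolding \<theta>t_def by (intro continuous_intros cl)
  have cXt: "continuous_on (UNIV \<times> I) (\<lambda>p. Xt (fst p) (snd p))"
    unfolding Xt_def by (intro continuous_intros cl)
  have cE: "continuous_on (UNIV \<times> I) (\<lambda>p. E (fst p) (snd p))"
    unfolding E_def by (intro continuous_intros cth)
  note cc = cl cPh cPhX cPhT cPhXX cth cthx cthxx ctht cXt cE
  have cuu: "continuous_on (UNIV \<times> I) (\<lambda>(x,t). uu x t)"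
    unfolding case_prod_unfold uu_eq by (intro continuous_intros cc)
  have cut: "continuous_on (UNIV \<times> I) (\<lambda>(x,t). ut x t)"
    unfolding case_prod_unfold ut_def by (intro continuous_intros cc)
  have cux: "continuous_on (UNIV \<times> I) (\<lambda>(x,t). ux x t)"
    unfolding case_prod_unfold ux_def by (intro continuous_intros cc)
  have cuxx: "continuous_on (UNIV \<times> I) (\<lambda>(x,t). uxx x t)"
    unfolding case_prod_unfold uxx_def
    by (intro continuous_on_add continuous_on_mult continuous_on_const continuous_on_of_real cc)
  have Rpos: "R t > 0" if t: "t \<in> I" for t unfolding R_eq using q_pos[OF t] by simp
  have "vnls_solution f g h uu (UNIV \<times> I)"
    unfolding vnls_solution_def
  proof (intro exI conjI)
    show "C12_partials uu (UNIV \<times> I) ut ux uxx"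
      unfolding C12_partials_def using dut dux duxx cuu cut cux cuxx by auto
    have EQ: "\<i> * ut x t + complex_of_real (f t) * uxx x t
                    + complex_of_real (g t * (cmod (uu x t))\<^sup>2) * uu x t + h x t * uu x t = 0"
      if t: "t \<in> I" for x t
    proof -
      have cm: "(cmod (complex_of_real (R t) * E x t * \<Phi> x t))\<^sup>2 = (R t)\<^sup>2 * (cmod (\<Phi> x t))\<^sup>2"
        unfolding E_def by (simp add: norm_mult power_mult_distrib)
      have nl: "\<i> * \<Phi>T x t + \<Phi>XX x t + complex_of_real (\<epsilon> * (cmod (\<Phi> x t))\<^sup>2) * \<Phi> x t = 0"
        unfolding \<Phi>T_def \<Phi>XX_def \<Phi>_def by (rule nlseq[OF D_contains[OF t]])
      have R0: "R t \<noteq> 0" using Rpos[OF t] by simp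
      show ?thesis
        unfolding ut_def uxx_def h_def uu_eq cm
        by (rule key_alg[OF R0 F1[where x=x, OF t] F2[OF t] F3[OF t] F4[OF t] F5[where x=x, OF t] nl])
    qed
    then show "\<forall>(x,t)\<in>UNIV \<times> I. \<i> * ut x t + complex_of_real (f t) * uxx x t
                    + complex_of_real (g t * (cmod (uu x t))\<^sup>2) * uu x t + h x t * uu x t = 0"
      by auto
  qed
  then show ?thesis unfolding uu_def .
qed
end
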